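(* Let $H$ be a separable Hilbert space and $A:H\to H$ a surjective bounded linear operator which is real diagonalisable as $A=V^{-1}M_fV$, where $(\Omega,\mathcal{A},\mu)$ is a measure space, $f\in L^\infty_\mu(\Omega)$ is real-valued, $M_f:L^2_\mu(\Omega)\to L^2_\mu(\Omega)$ is multiplication by $f$, and $V:H\to L^2_\mu(\Omega)$ is an invertible bounded linear operator. Define $\mathcal{F}(x):=-\frac12\,(Vx,M_fVx)_{L^2_\mu(\Omega)}$ and $K:=V^{-1}V^{-\mathsf{T}}$, and let $d$ be the associated metric $$d(x_1,x_2)^2:=\inf_{\gamma\in\Gamma(x_1,x_2)}\int_0^1\sup_{\xi\in H}\big\langle \xi,2\dot\gamma(s)-K\xi\big\rangle_H\,\mathrm{d}s .$$ Then $\mathcal{F}$ is geodesically $\lambda$-convex with respect to $d$, with $$\lambda:=-\operatorname*{ess\,sup}_{\omega\in\Omega}f(\omega)\;c_V,\qquad c_V:=\begin{cases}\|V^{-1}\|^2\,\|V\|^2,&\text{if }\operatorname*{ess\,sup}_{\Omega}f\ge0,\\ \|V^{-1}\|^{-2}\,\|V\|^{-2},&\text{otherwise},\end{cases}$$ where $\|V\|$ and $\|V^{-1}\|$ are the operator norms in $L(H,L^2_\mu(\Omega))$ and $L(L^2_\mu(\Omega),H)$. If in addition the measure space $(\Omega,\mathcal{A},\mu)$ is finite and the spectrum satisfies $\sigma(A)\subset(-\infty,0]$, then $f\le0$ $\mu$-a.e., and hence $\lambda\ge0$.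
   Context: $V^{\mathsf{T}}:L^2_\mu(\Omega)\to H$ denotes the Hilbert-space adjoint of $V$ and $V^{-\mathsf{T}}$ the adjoint of $V^{-1}$ (equivalently the inverse of $V^{\mathsf{T}}$). $\Gamma(x_1,x_2)$ is the set of curves $\gamma\in C^1([0,1],H)$ with $\gamma(0)=x_1$, $\gamma(1)=x_2$. Geodesic $\lambda$-convexity of $\mathcal{F}$ w.r.t. $d$ means: for every constant-speed (arc-length parametrised) geodesic $\gamma:[0,1]\to H$ of $(H,d)$ and every $\theta\in[0,1]$, $\mathcal{F}(\gamma(\theta))\le(1-\theta)\mathcal{F}(\gamma(0))+\theta\mathcal{F}(\gamma(1))-\lambda\frac{\theta(1-\theta)}{2}d(\gamma(0),\gamma(1))^2$. *)

theory Defs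
  imports "HOL-Analysis.Analysis" "HOL-Probability.Probability"
begin

text \<open>L^2_mu(Omega) is modelled by square-integrable measurable real functions,
  all statements about L^2 elements being understood up to mu-a.e. equality.\<close>

definition L2 :: "'w measure \<Rightarrow> ('w \<Rightarrow> real) set" where
  "L2 M = {g. g \<in> borel_measurable M \<and> integrable M (\<lambda>w. (g w)^2)}"

definition L2inner :: "'w measure \<Rightarrow> ('w \<Rightarrow> real) \<Rightarrow> ('w \<Rightarrow> real) \<Rightarrow> real" where
  "L2inner M g h = (LINT w|M. g w * h w)"

definition L2norm :: "'w measure \<Rightarrow> ('w \<Rightarrow> real) \<Rightarrow> real" where
  "L2norm M g = sqrt (L2inner M g g)"

definition mult_op :: "('w \<Rightarrow> real) \<Rightarrow> ('w \<Rightarrow> real) \<Rightarrow> ('w \<Rightarrow> real)" where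
  "mult_op f g = (\<lambda>w. f w * g w)"

definition bounded_linear_to_L2 :: "'w measure \<Rightarrow> ('h::real_normed_vector \<Rightarrow> 'w \<Rightarrow> real) \<Rightarrow> bool" where
  "bounded_linear_to_L2 M V \<longleftrightarrow>
     (\<forall>x. V x \<in> L2 M) \<and>
     (\<forall>x y. V (x + y) = (\<lambda>w. V x w + V y w)) \<and>
     (\<forall>c x. V (c *\<^sub>R x) = (\<lambda>w. c * V x w)) \<and>
     (\<exists>C. \<forall>x. L2norm M (V x) \<le> C * norm x)"

definition is_bounded_inverse :: "'w measure \<Rightarrow> ('h::real_normed_vector \<Rightarrow> 'w \<Rightarrow> real)
     \<Rightarrow> (('w \<Rightarrow> real) \<Rightarrow> 'h) \<Rightarrow> bool" where
  "is_bounded_inverse M V Vinv \<longleftrightarrow>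
     (\<forall>x. Vinv (V x) = x) \<and>
     (\<forall>g\<in>L2 M. AE w in M. V (Vinv g) w = g w) \<and>
     (\<forall>g\<in>L2 M. \<forall>h\<in>L2 M. (AE w in M. g w = h w) \<longrightarrow> Vinv g = Vinv h) \<and>
     (\<forall>g\<in>L2 M. \<forall>h\<in>L2 M. Vinv (\<lambda>w. g w + h w) = Vinv g + Vinv h) \<and>
     (\<forall>g\<in>L2 M. \<forall>c. Vinv (\<lambda>w. c * g w) = c *\<^sub>R Vinv g) \<and>
     (\<exists>C. \<forall>g\<in>L2 M. norm (Vinv g) \<le> C * L2norm M g)"

text \<open>W is the Hilbert-space adjoint of Vinv, i.e. W = V^{-T} : H -> L^2.\<close>
definition is_adjoint_of_inv :: "'w measure \<Rightarrow> (('w \<Rightarrow> real) \<Rightarrow> 'h::real_inner)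
     \<Rightarrow> ('h \<Rightarrow> 'w \<Rightarrow> real) \<Rightarrow> bool" where
  "is_adjoint_of_inv M Vinv W \<longleftrightarrow>
     (\<forall>\<xi>. W \<xi> \<in> L2 M \<and> (\<forall>g\<in>L2 M. L2inner M (W \<xi>) g = inner \<xi> (Vinv g)))"

definition opnorm_V :: "'w measure \<Rightarrow> ('h::real_normed_vector \<Rightarrow> 'w \<Rightarrow> real) \<Rightarrow> real" where
  "opnorm_V M V = (SUP x. L2norm M (V x) / norm x)"

definition opnorm_Vinv :: "'w measure \<Rightarrow> (('w \<Rightarrow> real) \<Rightarrow> 'h::real_normed_vector) \<Rightarrow> real" where
  "opnorm_Vinv M Vinv = (SUP g\<in>L2 M. norm (Vinv g) / L2norm M g)"

definition curves :: "'h::real_normed_vector \<Rightarrow> 'h \<Rightarrow> (real \<Rightarrow> 'h) set" where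
  "curves x1 x2 = {\<gamma>. \<gamma> 0 = x1 \<and> \<gamma> 1 = x2 \<and>
      (\<exists>D. continuous_on {0..1} D \<and>
           (\<forall>s\<in>{0..1}. (\<gamma> has_vector_derivative D s) (at s within {0..1})))}"

definition Kdist :: "('h::real_inner \<Rightarrow> 'h) \<Rightarrow> 'h \<Rightarrow> 'h \<Rightarrow> real" where
  "Kdist K x1 x2 = sqrt (Inf ((\<lambda>\<gamma>. integral {0..1}
      (\<lambda>s. Sup (range (\<lambda>\<xi>. inner \<xi> (2 *\<^sub>R vector_derivative \<gamma> (at s within {0..1}) - K \<xi>)))))
      ` curves x1 x2))"

definition const_speed_geodesic :: "('h \<Rightarrow> 'h \<Rightarrow> real) \<Rightarrow> (real \<Rightarrow> 'h) \<Rightarrow> bool" where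
  "const_speed_geodesic d \<gamma> \<longleftrightarrow>
     (\<forall>s\<in>{0..1}. \<forall>t\<in>{0..1}. d (\<gamma> s) (\<gamma> t) = \<bar>t - s\<bar> * d (\<gamma> 0) (\<gamma> 1))"

definition geodesically_convex :: "('h \<Rightarrow> 'h \<Rightarrow> real) \<Rightarrow> ('h \<Rightarrow> real) \<Rightarrow> real \<Rightarrow> bool" where
  "geodesically_convex d F lam \<longleftrightarrow>
     (\<forall>\<gamma> \<theta>. const_speed_geodesic d \<gamma> \<longrightarrow> \<theta> \<in> {0..1} \<longrightarrow>
        F (\<gamma> \<theta>) \<le> (1 - \<theta>) * F (\<gamma> 0) + \<theta> * F (\<gamma> 1)
                   - lam * (\<theta> * (1 - \<theta>) / 2) * (d (\<gamma> 0) (\<gamma> 1))^2)"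

definition op_spectrum :: "('h::real_normed_vector \<Rightarrow> 'h) \<Rightarrow> real set" where
  "op_spectrum A = {l. \<not> (\<exists>B. bounded_linear B \<and> (\<forall>x. B (A x - l *\<^sub>R x) = x)
                                    \<and> (\<forall>y. A (B y) - l *\<^sub>R B y = y))}"

definition ess_sup :: "'w measure \<Rightarrow> ('w \<Rightarrow> real) \<Rightarrow> real" where
  "ess_sup M f = real_of_ereal (esssup M (\<lambda>w. ereal (f w)))"

end

theory Submission
  imports Defs
begin


lemma abs_mult_le_sq: "\<bar>x * y\<bar> \<le> x^2 + y^2" for x y :: real
proof -
  have "0 \<le> (\<bar>x\<bar> - \<bar>y\<bar>)^2" by simp
  hence "2 * (\<bar>x\<bar> * \<bar>y\<bar>) \<le> x^2 + y^2" by (simp add: power2_diff power2_abs)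
  moreover have "\<bar>x\<bar> * \<bar>y\<bar> \<ge> 0" by simp
  ultimately have "\<bar>x\<bar> * \<bar>y\<bar> \<le> x^2 + y^2" by linarith
  thus ?thesis by (simp add: abs_mult)
qed

lemma L2_meas: "g \<in> L2 M \<Longrightarrow> g \<in> borel_measurable M" by (simp add: L2_def)

lemma L2_prod_int:
  assumes "g \<in> L2 M" "h \<in> L2 M"
  shows "integrable M (\<lambda>w. g w * h w)"
proof (rule Bochner_Integration.integrable_bound)
  show "integrable M (\<lambda>w. (g w)^2 + (h w)^2)" using assms by (simp add: L2_def)
  show "(\<lambda>w. g w * h w) \<in> borel_measurable M" using assms unfolding L2_def by auto
  show "AE w in M. norm (g w * h w) \<le> norm ((g w)^2 + (h w)^2)"
    using abs_mult_le_sq by auto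
qed

lemma L2_sq_int: "g \<in> L2 M \<Longrightarrow> integrable M (\<lambda>w. g w * g w)"
  using L2_prod_int by blast

lemma L2inner_nonneg: "0 \<le> L2inner M g g"
  unfolding L2inner_def by (rule integral_nonneg_AE) simp

lemma L2inner_commute: "L2inner M g h = L2inner M h g"
  unfolding L2inner_def by (simp add: mult.commute)

lemma L2inner_scale: "L2inner M (\<lambda>w. c * g w) h = c * L2inner M g h"
  unfolding L2inner_def by (simp add: mult.assoc)

lemma L2inner_ineq:
  assumes "g \<in> L2 M" "h \<in> L2 M"
  shows "2 * L2inner M g h - L2inner M g g \<le> L2inner M h h"
proof -
  have i1: "integrable M (\<lambda>w. g w * h w)" "integrable M (\<lambda>w. g w * g w)" "integrable M (\<lambda>w. h w * h w)"
    using assms L2_prod_int by blast+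
  have "0 \<le> (LINT w|M. (g w - h w) * (g w - h w))"
    by (rule integral_nonneg_AE) simp
  also have "(LINT w|M. (g w - h w) * (g w - h w)) = (LINT w|M. (g w * g w + h w * h w) - 2 * (g w * h w))"
    by (rule Bochner_Integration.integral_cong) (auto simp: algebra_simps)
  also have "\<dots> = L2inner M g g + L2inner M h h - 2 * L2inner M g h"
    unfolding L2inner_def using i1 by simp
  finally show ?thesis by simp
qed

lemma L2inner_zero_AE:
  assumes "g \<in> L2 M" "L2inner M g g = 0"
  shows "AE w in M. g w = 0"
proof -
  have "AE w in M. g w * g w = 0"
    using assms integral_nonneg_eq_0_iff_AE[of M "\<lambda>w. g w * g w"] L2_sq_int[OF assms(1)]
    by (simp add: L2inner_def)
  then show ?thesis by simp
qed

lemma L2inner_AE_zero_left: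
  assumes "AE w in M. g w = 0"
  shows "L2inner M g h = 0"
  unfolding L2inner_def by (rule integral_eq_zero_AE) (use assms in auto)

lemma L2_CS:
  assumes g: "g \<in> L2 M" and h: "h \<in> L2 M"
  shows "\<bar>L2inner M g h\<bar> \<le> L2norm M g * L2norm M h"
proof -
  define a where "a = L2norm M g"
  define b where "b = L2norm M h"
  have a2: "a^2 = L2inner M g g" unfolding a_def L2norm_def using L2inner_nonneg by simp
  have b2: "b^2 = L2inner M h h" unfolding b_def L2norm_def using L2inner_nonneg by simp
  have a0: "a \<ge> 0" "b \<ge> 0" unfolding a_def b_def L2norm_def using L2inner_nonneg by auto
  show ?thesis
  proof (cases "a = 0 \<or> b = 0")
    case True
    then show ?thesis
    proof
      assume "a = 0"
      hence "AE w in M. g w = 0" using a2 L2inner_zero_AE[OF g] by simp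
      thus ?thesis using L2inner_AE_zero_left[of g M h] a0 by (simp add: a_def[symmetric] b_def[symmetric])
    next
      assume "b = 0"
      hence "AE w in M. h w = 0" using b2 L2inner_zero_AE[OF h] by simp
      thus ?thesis using L2inner_AE_zero_left[of h M g] L2inner_commute[of M g h] a0
        by (simp add: a_def[symmetric] b_def[symmetric])
    qed
  next
    case False
    hence ab: "a > 0" "b > 0" using a0 by auto
    have sc: "(\<lambda>w. c * k w) \<in> L2 M" if "k \<in> L2 M" for c k
      using that unfolding L2_def by (auto simp: power_mult_distrib)
    have "2 * L2inner M (\<lambda>w. b * g w) (\<lambda>w. s * a * h w) - L2inner M (\<lambda>w. b * g w) (\<lambda>w. b * g w)
           \<le> L2inner M (\<lambda>w. s * a * h w) (\<lambda>w. s * a * h w)" if "s = 1 \<or> s = -1" for s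
      by (rule L2inner_ineq) (use sc g h in auto)
    hence "2 * (b * (s * a * L2inner M h g)) - b * (b * L2inner M g g) \<le> s * a * (s * a * L2inner M h h)"
      if "s = 1 \<or> s = -1" for s
      using that by (simp add: L2inner_scale L2inner_commute[of M _ "\<lambda>w. _ * h w"] L2inner_commute[of M _ "\<lambda>w. _ * g w"])
    from this[of 1] this[of "-1"] have 
      "2 * a * b * L2inner M g h \<le> 2 * a * b * (a * b)" "- (2 * a * b * L2inner M g h) \<le> 2 * a * b * (a * b)"
      unfolding a2[symmetric] b2[symmetric] L2inner_commute[of M h g] by (simp_all add: power2_eq_square algebra_simps)
    moreover have p: "2 * a * b > 0" using ab by simp
    ultimately have "L2inner M g h \<le> a * b" "- L2inner M g h \<le> a * b"
      using mult_le_cancel_left_pos[OF p] by (metis mult_minus_right)+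
    then show ?thesis unfolding a_def b_def by (simp add: abs_le_iff)
  qed
qed


lemma par_helper: fixes A B X Y pa pb m :: real
 assumes "m \<le> X / 8 - (pa + pb) / 2" "Y = 2 * A + 2*B - X"
 shows "Y \<le> 4 * (A / 2 - pa) + 4 * (B / 2 - pb) - 8 * m"
 using assms by argo

lemma riesz_repr:
  fixes \<phi> :: "'h::{real_inner,complete_space} \<Rightarrow> real"
  assumes bl: "bounded_linear \<phi>"
  shows "\<exists>z. \<forall>y. \<phi> y = inner z y"
proof -
  obtain K where K: "K > 0" "\<And>x. norm (\<phi> x) \<le> norm x * K"
    using bounded_linear.pos_bounded[OF bl] by blast
  have lin: "\<And>a b. \<phi> (a + b) = \<phi> a + \<phi> b" "\<And>c a. \<phi> (c *\<^sub>R a) = c * \<phi> a"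
    using bl by (auto simp: bounded_linear_def linear_iff)
  define J where "J x = (norm x)^2 / 2 - \<phi> x" for x
  have Jlow: "J x \<ge> - (K^2) / 2" for x
  proof -
    have "\<phi> x \<le> norm x * K" using K(2)[of x] by simp
    moreover have "0 \<le> (norm x - K)^2" by simp
    ultimately show ?thesis unfolding J_def by (simp add: power2_eq_square algebra_simps)
  qed
  define m where "m = Inf (range J)"
  have bdd: "bdd_below (range J)" by (rule bdd_belowI[of _ "-(K^2)/2"]) (use Jlow in auto)
  have m_le: "m \<le> J x" for x unfolding m_def by (rule cInf_lower[OF _ bdd]) auto
  have "\<exists>x. J x < m + 1 / (real n + 1)" for n
  proof -
    have "Inf (range J) < m + 1 / (real n + 1)" unfolding m_def by simp
    then show ?thesis using cInf_lessD[of "range J"] by auto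
  qed
  then obtain xs where xs: "\<And>n. J (xs n) < m + 1 / (real n + 1)" by metis
  have par: "(norm (a - b))^2 \<le> 4 * J a + 4 * J b - 8 * m" for a b
  proof -
    have "m \<le> J ((1/2) *\<^sub>R (a + b))" by (rule m_le)
    hence "m \<le> (norm (a+b))^2 / 8 - (\<phi> a + \<phi> b) / 2"
      unfolding J_def by (simp add: lin power2_eq_square)
    moreover have "(norm (a - b))^2 = 2 * (norm a)^2 + 2 * (norm b)^2 - (norm (a + b))^2"
      by (simp add: power2_norm_eq_inner inner_add inner_diff inner_commute)
    ultimately show ?thesis unfolding J_def by (rule par_helper)
  qed
  have "Cauchy xs"
  proof (rule metric_CauchyI)
    fix e :: real assume e: "e > 0"
    obtain N :: nat where N: "8 / e^2 < real N + 1"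
    proof -
      obtain N :: nat where "8 / e^2 < real N" using reals_Archimedean2 by blast
      then show ?thesis using that[of N] by simp
    qed
    have e2: "e^2 > 0" using e by simp
    have "8 < (real N + 1) * e^2" using N e2 by (simp add: divide_less_eq)
    hence "8 / (real N + 1) < e^2" by (simp add: divide_less_eq mult.commute)
    show "\<exists>M. \<forall>m\<ge>M. \<forall>n\<ge>M. dist (xs m) (xs n) < e"
    proof (intro exI allI impI)
      fix n k assume nk: "n \<ge> N" "k \<ge> N"
      have a: "1 / (real n + 1) \<le> 1 / (real N + 1)" "1 / (real k + 1) \<le> 1 / (real N + 1)"
        using nk by (auto simp: frac_le)
      have "(dist (xs n) (xs k))^2 \<le> 4 * J (xs n) + 4 * J (xs k) - 8 * m"
        using par by (simp add: dist_norm)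
      also have "\<dots> < 8 / (real N + 1)" using xs[of n] xs[of k] a by simp
      also have "\<dots> < e^2" by fact
      finally have "(dist (xs n) (xs k))^2 < e^2" .
      then show "dist (xs n) (xs k) < e"
        using power_less_imp_less_base[of "dist (xs n) (xs k)" 2 e] e by simp
    qed
  qed
  then obtain z where z: "xs \<longlonglongrightarrow> z" using Cauchy_convergent_iff convergent_def by blast
  have contJ: "isCont J x" for x
    unfolding J_def using linear_continuous_at[OF bl] by (intro continuous_intros) auto
  have l1: "(\<lambda>n. J (xs n)) \<longlonglongrightarrow> J z" using isCont_tendsto_compose[OF contJ z] .
  have l2: "(\<lambda>n. J (xs n)) \<longlonglongrightarrow> m"
  proof (rule tendsto_sandwich[of "\<lambda>n. m" _ _ "\<lambda>n. m + 1 / (real n + 1)"])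
    show "\<forall>\<^sub>F n in sequentially. m \<le> J (xs n)" using m_le by simp
    show "\<forall>\<^sub>F n in sequentially. J (xs n) \<le> m + 1 / (real n + 1)" using xs by (simp add: less_imp_le)
    show "(\<lambda>n. m) \<longlonglongrightarrow> m" by simp
    show "(\<lambda>n. m + 1 / (real n + 1)) \<longlonglongrightarrow> m"
      using tendsto_add[OF tendsto_const[of m] LIMSEQ_inverse_real_of_nat]
      by (simp add: inverse_eq_divide add.commute)
  qed
  have Jz: "J z = m" using LIMSEQ_unique[OF l1 l2] .
  show ?thesis
  proof (intro exI allI)
    fix y
    define a where "a = inner z y - \<phi> y"
    define b where "b = (norm y)^2 / 2"
    have b0: "b \<ge> 0" unfolding b_def by simp
    have key: "t * a + t^2 * b \<ge> 0" for t
    proof -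
      have "J z \<le> J (z + t *\<^sub>R y)" using Jz m_le by simp
      moreover have "(norm (z + t *\<^sub>R y))^2 = (norm z)^2 + 2 * t * inner z y + t^2 * (norm y)^2"
        unfolding power2_norm_eq_inner by (simp add: inner_add inner_commute power2_eq_square algebra_simps)
      ultimately show ?thesis unfolding J_def a_def b_def by (simp add: lin algebra_simps)
    qed
    have "a = 0"
    proof (rule ccontr)
      assume a0: "a \<noteq> 0"
      define t where "t = - a / (2 * b + 1)"
      have "t * a + t^2 * b = - (a^2) * (b + 1) / (2*b+1)^2"
      proof -
        have d: "2*b+1 > 0" using b0 by simp
        have "\<And>d::real. d > 0 \<Longrightarrow> (-a/d)*a + (-a/d)^2*b = -(a^2)*(d - b)/d^2"
          by (simp add: field_simps power2_eq_square)
        from this[OF d] show ?thesis unfolding t_def by simp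
      qed
      also have "\<dots> < 0"
      proof -
        have "a^2 > 0" using a0 by simp
        hence "- (a^2) * (b + 1) < 0" using b0 by (simp add: mult_pos_pos)
        moreover have "(2*b+1)^2 > 0" using b0 by simp
        ultimately show ?thesis by (simp add: divide_neg_pos)
      qed
      finally show False using key[of t] by simp
    qed
    then show "\<phi> y = inner z y" unfolding a_def by simp
  qed
qed


locale hsetup =
  fixes M :: "'w measure" and f :: "'w \<Rightarrow> real"
    and V :: "'h::{real_inner,complete_space} \<Rightarrow> 'w \<Rightarrow> real"
    and Vinv :: "('w \<Rightarrow> real) \<Rightarrow> 'h" and W :: "'h \<Rightarrow> 'w \<Rightarrow> real" and C0 :: real
  assumes f_meas: "f \<in> borel_measurable M"
    and f_bdd: "AE w in M. \<bar>f w\<bar> \<le> C0"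
    and V: "bounded_linear_to_L2 M V"
    and Vinv: "is_bounded_inverse M V Vinv"
    and W: "is_adjoint_of_inv M Vinv W"
begin

lemma VL2: "V x \<in> L2 M" using V by (simp add: bounded_linear_to_L2_def)
lemma V_add: "V (x + y) = (\<lambda>w. V x w + V y w)" using V by (simp add: bounded_linear_to_L2_def)
lemma V_scale: "V (c *\<^sub>R x) = (\<lambda>w. c * V x w)" using V by (simp add: bounded_linear_to_L2_def)
lemma V_bound: "\<exists>CV\<ge>0. \<forall>x. L2norm M (V x) \<le> CV * norm x"
proof -
  obtain C where C: "\<And>x. L2norm M (V x) \<le> C * norm x" using V by (auto simp: bounded_linear_to_L2_def)
  have "C * norm x \<le> \<bar>C\<bar> * norm x" for x by (simp add: mult_right_mono)
  then have "L2norm M (V x) \<le> \<bar>C\<bar> * norm x" for x using C[of x] by (meson order_trans)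
  then show ?thesis by (intro exI[of _ "\<bar>C\<bar>"]) auto
qed
lemma Vinv_V: "Vinv (V x) = x" using Vinv unfolding is_bounded_inverse_def by blast
lemma V_Vinv: "g \<in> L2 M \<Longrightarrow> AE w in M. V (Vinv g) w = g w" using Vinv unfolding is_bounded_inverse_def by blast
lemma Vinv_cong: "g \<in> L2 M \<Longrightarrow> h \<in> L2 M \<Longrightarrow> AE w in M. g w = h w \<Longrightarrow> Vinv g = Vinv h"
  using Vinv unfolding is_bounded_inverse_def by blast
lemma Vinv_add: "g \<in> L2 M \<Longrightarrow> h \<in> L2 M \<Longrightarrow> Vinv (\<lambda>w. g w + h w) = Vinv g + Vinv h"
  using Vinv unfolding is_bounded_inverse_def by blast
lemma Vinv_scale: "g \<in> L2 M \<Longrightarrow> Vinv (\<lambda>w. c * g w) = c *\<^sub>R Vinv g"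
  using Vinv unfolding is_bounded_inverse_def by blast
lemma Vinv_bound: "\<exists>CI\<ge>0. \<forall>g\<in>L2 M. norm (Vinv g) \<le> CI * L2norm M g"
proof -
  obtain C where C: "\<And>g. g \<in> L2 M \<Longrightarrow> norm (Vinv g) \<le> C * L2norm M g"
    using Vinv unfolding is_bounded_inverse_def by blast
  have "C * L2norm M g \<le> \<bar>C\<bar> * L2norm M g" for g
    by (rule mult_right_mono) (auto simp: L2norm_def L2inner_nonneg)
  then have "norm (Vinv g) \<le> \<bar>C\<bar> * L2norm M g" if "g \<in> L2 M" for g
    using C[OF that] order_trans by blast
  then show ?thesis by (intro exI[of _ "\<bar>C\<bar>"]) auto
qed
lemma WL2: "W \<xi> \<in> L2 M" using W by (simp add: is_adjoint_of_inv_def)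
lemma W_adj: "g \<in> L2 M \<Longrightarrow> L2inner M (W \<xi>) g = inner \<xi> (Vinv g)"
  using W by (simp add: is_adjoint_of_inv_def)

definition B :: "'h \<Rightarrow> 'h \<Rightarrow> real" where "B x y = L2inner M (V x) (V y)"

lemma B_add_left: "B (x + y) z = B x z + B y z"
proof -
  have "integrable M (\<lambda>w. V x w * V z w)" "integrable M (\<lambda>w. V y w * V z w)"
    using L2_prod_int VL2 by blast+
  then show ?thesis unfolding B_def L2inner_def V_add by (simp add: distrib_right)
qed

lemma B_scale_left: "B (c *\<^sub>R x) y = c * B x y"
  unfolding B_def V_scale by (rule L2inner_scale)

lemma B_commute: "B x y = B y x" unfolding B_def by (rule L2inner_commute)

lemma B_nonneg: "B x x \<ge> 0" unfolding B_def by (rule L2inner_nonneg)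

lemma B_bb: "bounded_bilinear B"
proof
  fix a a' b b' :: 'h and r :: real
  show "B (a + a') b = B a b + B a' b" by (rule B_add_left)
  show "B a (b + b') = B a b + B a b'" using B_add_left[of b b' a] B_commute[of a b] B_commute[of a b'] B_commute[of a "b+b'"] by simp
  show "B (r *\<^sub>R a) b = r *\<^sub>R B a b" using B_scale_left by simp
  show "B a (r *\<^sub>R b) = r *\<^sub>R B a b" using B_scale_left[of r b a] B_commute[of a "r *\<^sub>R b"] B_commute[of a b] by simp
next
  obtain CV where CV: "CV \<ge> 0" "\<And>x. L2norm M (V x) \<le> CV * norm x" using V_bound by blast
  have "norm (B a b) \<le> norm a * norm b * CV^2" for a b
  proof -
    have "norm (B a b) \<le> L2norm M (V a) * L2norm M (V b)"
      unfolding B_def using L2_CS[OF VL2 VL2] by simp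
    also have "\<dots> \<le> (CV * norm a) * (CV * norm b)"
      by (rule mult_mono) (use CV in \<open>auto simp: L2norm_def L2inner_nonneg\<close>)
    finally show ?thesis by (simp add: power2_eq_square algebra_simps)
  qed
  then show "\<exists>K. \<forall>a b. norm (B a b) \<le> norm a * norm b * K" by blast
qed

lemma B_Vinv: "g \<in> L2 M \<Longrightarrow> B v (Vinv g) = L2inner M (V v) g"
  unfolding B_def L2inner_def
proof (rule integral_cong_AE)
  assume g: "g \<in> L2 M"
  show "(\<lambda>w. V v w * V (Vinv g) w) \<in> borel_measurable M"
    using L2_meas[OF VL2[of v]] L2_meas[OF VL2[of "Vinv g"]] by (intro borel_measurable_times)
  show "(\<lambda>w. V v w * g w) \<in> borel_measurable M"
    using L2_meas[OF VL2[of v]] L2_meas[OF g] by (intro borel_measurable_times)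
  show "AE w in M. V v w * V (Vinv g) w = V v w * g w"
    using V_Vinv[OF g] by eventually_elim simp
qed

lemma sup_eq: "Sup (range (\<lambda>\<xi>. inner \<xi> (2 *\<^sub>R v - Vinv (W \<xi>)))) = B v v"
proof (rule cSup_eq_maximum)
  have val: "inner \<xi> (2 *\<^sub>R v - Vinv (W \<xi>)) = 2 * L2inner M (W \<xi>) (V v) - L2inner M (W \<xi>) (W \<xi>)" for \<xi>
  proof -
    have "inner \<xi> v = L2inner M (W \<xi>) (V v)" using W_adj[OF VL2, of \<xi> v] Vinv_V by simp
    moreover have "inner \<xi> (Vinv (W \<xi>)) = L2inner M (W \<xi>) (W \<xi>)" using W_adj[OF WL2] by simp
    ultimately show ?thesis by (simp add: inner_diff_right)
  qed
  show "x \<le> B v v" if xr: "x \<in> range (\<lambda>\<xi>. inner \<xi> (2 *\<^sub>R v - Vinv (W \<xi>)))" for x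
  proof -
    obtain \<zeta> where "x = inner \<zeta> (2 *\<^sub>R v - Vinv (W \<zeta>))" using xr by blast
    then have "x = 2 * L2inner M (W \<zeta>) (V v) - L2inner M (W \<zeta>) (W \<zeta>)" using val by simp
    then show ?thesis using L2inner_ineq[OF WL2 VL2, of \<zeta> v] unfolding B_def by simp
  qed
  obtain \<xi> where xi: "\<And>y. B v y = inner \<xi> y"
    using riesz_repr[OF bounded_bilinear.bounded_linear_right[OF B_bb, of v]] by blast
  have "inner \<xi> (Vinv (W \<xi>)) = B v v"
  proof -
    have "inner \<xi> (Vinv (W \<xi>)) = B v (Vinv (W \<xi>))" using xi by simp
    also have "\<dots> = L2inner M (V v) (W \<xi>)" using B_Vinv[OF WL2] by simp
    also have "\<dots> = L2inner M (W \<xi>) (V v)" by (rule L2inner_commute)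
    also have "\<dots> = inner \<xi> (Vinv (V v))" using W_adj[OF VL2] by simp
    also have "\<dots> = inner \<xi> v" using Vinv_V by simp
    also have "\<dots> = B v v" using xi by simp
    finally show ?thesis .
  qed
  hence xv: "inner \<xi> (2 *\<^sub>R v - Vinv (W \<xi>)) = B v v" using xi[of v] by (simp add: inner_diff_right)
  then show "B v v \<in> range (\<lambda>\<xi>. inner \<xi> (2 *\<^sub>R v - Vinv (W \<xi>)))" using xv[symmetric] by blast
qed

end


context hsetup begin

interpretation Bb: bounded_bilinear B by (rule B_bb)

lemma val_le: "inner \<xi> (2 *\<^sub>R u - Vinv (W \<xi>)) \<le> B u u"
proof -
  have "inner \<xi> u = L2inner M (W \<xi>) (V u)" using W_adj[OF VL2, of \<xi> u] Vinv_V by simp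
  moreover have "inner \<xi> (Vinv (W \<xi>)) = L2inner M (W \<xi>) (W \<xi>)" using W_adj[OF WL2] by simp
  ultimately have "inner \<xi> (2 *\<^sub>R u - Vinv (W \<xi>)) = 2 * L2inner M (W \<xi>) (V u) - L2inner M (W \<xi>) (W \<xi>)"
    by (simp add: inner_diff_right)
  then show ?thesis using L2inner_ineq[OF WL2 VL2, of \<xi> u] unfolding B_def by simp
qed

lemma val_attain: "\<exists>\<xi>. inner \<xi> (2 *\<^sub>R u - Vinv (W \<xi>)) = B u u"
proof -
  obtain \<xi> where xi: "\<And>y. B u y = inner \<xi> y"
    using riesz_repr[OF bounded_bilinear.bounded_linear_right[OF B_bb, of u]] by blast
  have "inner \<xi> (Vinv (W \<xi>)) = B u u"
  proof -
    have "inner \<xi> (Vinv (W \<xi>)) = B u (Vinv (W \<xi>))" using xi by simp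
    also have "\<dots> = L2inner M (V u) (W \<xi>)" using B_Vinv[OF WL2] by simp
    also have "\<dots> = L2inner M (W \<xi>) (V u)" by (rule L2inner_commute)
    also have "\<dots> = inner \<xi> (Vinv (V u))" using W_adj[OF VL2] by simp
    also have "\<dots> = inner \<xi> u" using Vinv_V by simp
    also have "\<dots> = B u u" using xi by simp
    finally show ?thesis .
  qed
  hence "inner \<xi> (2 *\<^sub>R u - Vinv (W \<xi>)) = B u u" using xi[of u] by (simp add: inner_diff_right)
  then show ?thesis by blast
qed

lemma Kdist_eq: "Kdist (\<lambda>\<xi>. Vinv (W \<xi>)) x1 x2 = sqrt (B (x2 - x1) (x2 - x1))"
proof -
  define v where "v = x2 - x1"
  define G where "G \<gamma> = integral {0..1}
      (\<lambda>s. Sup (range (\<lambda>\<xi>. inner \<xi> (2 *\<^sub>R vector_derivative \<gamma> (at s within {0..1}) - Vinv (W \<xi>)))))"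
    for \<gamma> :: "real \<Rightarrow> 'h"
  have Kd: "Kdist (\<lambda>\<xi>. Vinv (W \<xi>)) x1 x2 = sqrt (Inf (G ` curves x1 x2))"
    unfolding Kdist_def G_def by simp
  have deriv: "G \<gamma> = integral {0..1} (\<lambda>s. B (D s) (D s))"
    if "\<forall>s\<in>{0..1}. (\<gamma> has_vector_derivative D s) (at s within {0..1})" for \<gamma> D
    unfolding G_def
  proof (rule integral_cong)
    fix s :: real assume s: "s \<in> {0..1}"
    have "vector_derivative \<gamma> (at s within {0..1}) = D s"
    proof (rule vector_derivative_within)
      show "at s within {0..1} \<noteq> bot"
        using islimpt_Icc[of 0 "1::real" s] s trivial_limit_within[of s "{0..1::real}"] by simp
      show "(\<gamma> has_vector_derivative D s) (at s within {0..1})" using that s by blast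
    qed
    then show "Sup (range (\<lambda>\<xi>. inner \<xi> (2 *\<^sub>R vector_derivative \<gamma> (at s within {0..1}) - Vinv (W \<xi>)))) = B (D s) (D s)"
      using sup_eq by simp
  qed
  have "Inf (G ` curves x1 x2) = B v v"
  proof (rule cInf_eq_minimum)
    define l where "l = (\<lambda>s::real. s *\<^sub>R v + x1)"
    have ld: "(l has_vector_derivative v) (at s within {0..1})" for s
    proof -
      have "((\<lambda>s::real. s *\<^sub>R v) has_vector_derivative v) (at s within {0..1})"
        unfolding has_vector_derivative_def
        by (rule bounded_linear_imp_has_derivative) (rule bounded_linear_scaleR_left)
      then show ?thesis unfolding l_def by (simp add: has_vector_derivative_add_const)
    qed
    have "l \<in> curves x1 x2"
      unfolding curves_def
      by (intro CollectI conjI exI[of _ "\<lambda>s. v"]) (use ld in \<open>auto simp: l_def v_def\<close>)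
    moreover have "G l = B v v"
      using deriv[of l "\<lambda>s. v"] ld by simp
    ultimately show "B v v \<in> G ` curves x1 x2" by (metis imageI)
  next
    fix y assume "y \<in> G ` curves x1 x2"
    then obtain \<gamma> where g: "\<gamma> \<in> curves x1 x2" and y: "y = G \<gamma>" by blast
    then obtain D where g0: "\<gamma> 0 = x1" and g1: "\<gamma> 1 = x2" and Dc: "continuous_on {0..1} D"
      and gd: "\<forall>s\<in>{0..1}. (\<gamma> has_vector_derivative D s) (at s within {0..1})"
      unfolding curves_def by blast
    have yG: "y = integral {0..1} (\<lambda>s. B (D s) (D s))" using y deriv[OF gd] by simp
    have cont: "continuous_on {0..1} (\<lambda>s. B (D s) (D s))"
      by (rule Bb.continuous_on[OF Dc Dc])
    have hi: "((\<lambda>s. B (D s) (D s)) has_integral y) {0..1}"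
      using integrable_continuous_interval[OF cont] yG has_integral_integral by blast
    obtain \<xi> where xi: "inner \<xi> (2 *\<^sub>R v - Vinv (W \<xi>)) = B v v" using val_attain by blast
    define c where "c = inner \<xi> (Vinv (W \<xi>))"
    have I1: "((\<lambda>s. inner \<xi> (D s)) has_integral inner \<xi> (\<gamma> 1) - inner \<xi> (\<gamma> 0)) {0..1}"
    proof (rule fundamental_theorem_of_calculus)
      show "(0::real) \<le> 1" by simp
      fix s :: real assume "s \<in> {0..1}"
      then show "((\<lambda>s. inner \<xi> (\<gamma> s)) has_vector_derivative inner \<xi> (D s)) (at s within {0..1})"
        using bounded_linear.has_vector_derivative[OF bounded_linear_inner_right] gd by blast
    qed
    have I2: "((\<lambda>s. c) has_integral c) {0..1::real}"
      using has_integral_const_real[of c 0 "1::real"] by simp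
    have I3: "((\<lambda>s. 2 * inner \<xi> (D s) - c) has_integral (2 * (inner \<xi> (\<gamma> 1) - inner \<xi> (\<gamma> 0)) - c)) {0..1}"
      using has_integral_diff[OF has_integral_mult_right[OF I1, of 2] I2] by (simp add: mult.commute)
    have "2 * (inner \<xi> (\<gamma> 1) - inner \<xi> (\<gamma> 0)) - c = B v v"
      using xi unfolding c_def v_def g0 g1 by (simp add: inner_diff_right)
    with I3 have I4: "((\<lambda>s. 2 * inner \<xi> (D s) - c) has_integral B v v) {0..1}" by simp
    show "B v v \<le> y"
    proof (rule has_integral_le[OF I4 hi])
      fix s :: real assume "s \<in> {0..1}"
      show "2 * inner \<xi> (D s) - c \<le> B (D s) (D s)"
        using val_le[of \<xi> "D s"] unfolding c_def by (simp add: inner_diff_right)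
    qed
  qed
  then show ?thesis using Kd v_def by simp
qed


definition Q :: "'h \<Rightarrow> 'h \<Rightarrow> real" where "Q x y = L2inner M (V x) (mult_op f (V y))"

lemma Q_int: "integrable M (\<lambda>w. V x w * mult_op f (V y) w)"
proof (rule Bochner_Integration.integrable_bound)
  show "integrable M (\<lambda>w. \<bar>C0\<bar> * \<bar>V x w * V y w\<bar>)"
    using L2_prod_int[OF VL2 VL2, of x y] by simp
  show "(\<lambda>w. V x w * mult_op f (V y) w) \<in> borel_measurable M"
    unfolding mult_op_def using L2_meas[OF VL2[of x]] L2_meas[OF VL2[of y]] f_meas by measurable
  show "AE w in M. norm (V x w * mult_op f (V y) w) \<le> norm (\<bar>C0\<bar> * \<bar>V x w * V y w\<bar>)"
    using f_bdd
  proof eventually_elim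
    case (elim w)
    have "\<bar>V x w * (f w * V y w)\<bar> = \<bar>f w\<bar> * \<bar>V x w * V y w\<bar>" by (simp add: abs_mult)
    also have "\<dots> \<le> \<bar>C0\<bar> * \<bar>V x w * V y w\<bar>" using elim by (intro mult_right_mono) auto
    finally show ?case by (simp add: mult_op_def)
  qed
qed

lemma Q_bilinear: "bilinear Q"
  unfolding bilinear_def
proof (intro conjI allI)
  fix x :: 'h
  show "linear (Q x)"
  proof (rule linearI)
    fix a b :: 'h and r :: real
    show "Q x (a + b) = Q x a + Q x b"
      unfolding Q_def L2inner_def V_add mult_op_def
      using Q_int[of x a] Q_int[of x b] unfolding mult_op_def by (simp add: algebra_simps)
    show "Q x (r *\<^sub>R a) = r *\<^sub>R Q x a"
      unfolding Q_def L2inner_def V_scale mult_op_def by (simp add: algebra_simps)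
  qed
next
  fix y :: 'h
  show "linear (\<lambda>x. Q x y)"
  proof (rule linearI)
    fix a b :: 'h and r :: real
    show "Q (a + b) y = Q a y + Q b y"
      unfolding Q_def L2inner_def V_add mult_op_def
      using Q_int[of a y] Q_int[of b y] unfolding mult_op_def by (simp add: algebra_simps)
    show "Q (r *\<^sub>R a) y = r *\<^sub>R Q a y"
      unfolding Q_def L2inner_def V_scale mult_op_def by (simp add: algebra_simps)
  qed
qed

lemma Q_commute: "Q x y = Q y x"
  unfolding Q_def L2inner_def mult_op_def by (simp add: algebra_simps)


lemma quad_expand:
  assumes bl: "bilinear P" and sym: "\<And>x y. P x y = P y x"
  shows "P ((1 - t) *\<^sub>R x + t *\<^sub>R y) ((1 - t) *\<^sub>R x + t *\<^sub>R y)
         = (1 - t) * P x x + t * P y y - t * (1 - t) * P (x - y) (x - y)"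
proof -
  have e1: "P ((1 - t) *\<^sub>R x + t *\<^sub>R y) ((1 - t) *\<^sub>R x + t *\<^sub>R y)
     = (1-t)*(1-t) * P x x + 2 * t * (1 - t) * P x y + t * t * P y y"
    unfolding bilinear_ladd[OF bl] bilinear_radd[OF bl] bilinear_lmul[OF bl] bilinear_rmul[OF bl] sym[of y x]
    by (simp add: algebra_simps)
  have e2: "P (x - y) (x - y) = P x x - 2 * P x y + P y y"
    unfolding bilinear_lsub[OF bl] bilinear_rsub[OF bl] sym[of y x] by (simp add: algebra_simps)
  show ?thesis unfolding e1 e2 by (simp add: algebra_simps)
qed

lemma B_minus: "B (y - x) (y - x) = B (x - y) (x - y)"
proof -
  have "y - x = (-1) *\<^sub>R (x - y)" by simp
  then show ?thesis by (simp only: B_scale_left Bb.scaleR_right) simp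
qed

lemma geo_mid:
  assumes g: "const_speed_geodesic (Kdist (\<lambda>\<xi>. Vinv (W \<xi>))) \<gamma>" and t: "t \<in> {0..1}"
  shows "B (\<gamma> t - ((1 - t) *\<^sub>R \<gamma> 0 + t *\<^sub>R \<gamma> 1)) (\<gamma> t - ((1 - t) *\<^sub>R \<gamma> 0 + t *\<^sub>R \<gamma> 1)) = 0"
proof -
  define a where "a = \<gamma> t - \<gamma> 0"
  define b where "b = \<gamma> 1 - \<gamma> t"
  define E where "E = B (\<gamma> 1 - \<gamma> 0) (\<gamma> 1 - \<gamma> 0)"
  have E0: "E \<ge> 0" unfolding E_def by (rule B_nonneg)
  have sq: "B z z = r^2 * E" if "sqrt (B z z) = r * sqrt E" "r \<ge> 0" for z r
  proof -
    have "B z z = (sqrt (B z z))^2" using B_nonneg by simp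
    also have "\<dots> = r^2 * E" using that E0 by (simp add: power_mult_distrib)
    finally show ?thesis .
  qed
  have gd: "\<And>s u. s \<in> {0..1} \<Longrightarrow> u \<in> {0..1} \<Longrightarrow>
     Kdist (\<lambda>\<xi>. Vinv (W \<xi>)) (\<gamma> s) (\<gamma> u) = \<bar>u - s\<bar> * Kdist (\<lambda>\<xi>. Vinv (W \<xi>)) (\<gamma> 0) (\<gamma> 1)"
    using g unfolding const_speed_geodesic_def by blast
  have "Kdist (\<lambda>\<xi>. Vinv (W \<xi>)) (\<gamma> 0) (\<gamma> t) = \<bar>t - 0\<bar> * Kdist (\<lambda>\<xi>. Vinv (W \<xi>)) (\<gamma> 0) (\<gamma> 1)"
    using gd[of 0 t] t by simp
  hence "sqrt (B a a) = t * sqrt E" using t unfolding Kdist_eq a_def E_def by simp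
  hence Ba: "B a a = t^2 * E" using sq t by simp
  have "Kdist (\<lambda>\<xi>. Vinv (W \<xi>)) (\<gamma> t) (\<gamma> 1) = \<bar>1 - t\<bar> * Kdist (\<lambda>\<xi>. Vinv (W \<xi>)) (\<gamma> 0) (\<gamma> 1)"
    using gd[of t 1] t by simp
  hence "sqrt (B b b) = (1 - t) * sqrt E" using t unfolding Kdist_eq b_def E_def by simp
  hence Bbb: "B b b = (1 - t)^2 * E" using sq t by simp
  have ab: "\<gamma> 1 - \<gamma> 0 = a + b" unfolding a_def b_def by simp
  have "E = B a a + 2 * B a b + B b b"
    unfolding E_def ab using B_commute[of b a] by (simp add: Bb.add_left Bb.add_right)
  hence Bab: "B a b = t * (1 - t) * E" using Ba Bbb by (simp add: power2_eq_square algebra_simps)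
  have m: "\<gamma> t - ((1 - t) *\<^sub>R \<gamma> 0 + t *\<^sub>R \<gamma> 1) = (1 - t) *\<^sub>R a - t *\<^sub>R b"
    unfolding a_def b_def by (simp add: algebra_simps)
  show ?thesis unfolding m Bb.diff_left Bb.diff_right Bb.scaleR_left Bb.scaleR_right B_commute[of b a] Ba Bbb Bab
    by (simp add: power2_eq_square algebra_simps)
qed

lemma geo_convex:
  assumes key: "\<And>h. Q h h + lam * B h h \<le> 0"
  shows "geodesically_convex (Kdist (\<lambda>\<xi>. Vinv (W \<xi>))) (\<lambda>x. - (1/2) * Q x x) lam"
  unfolding geodesically_convex_def
proof (intro allI impI)
  fix \<gamma> :: "real \<Rightarrow> 'h" and t :: real
  assume g: "const_speed_geodesic (Kdist (\<lambda>\<xi>. Vinv (W \<xi>))) \<gamma>" and t: "t \<in> {0..1}"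
  define p where "p = (1 - t) *\<^sub>R \<gamma> 0 + t *\<^sub>R \<gamma> 1"
  define m where "m = \<gamma> t - p"
  have "B m m = 0" using geo_mid[OF g t] unfolding m_def p_def .
  hence Vm: "AE w in M. V m w = 0" using L2inner_zero_AE[OF VL2] unfolding B_def by blast
  have gt: "\<gamma> t = p + m" unfolding m_def by simp
  have Qeq: "Q (\<gamma> t) (\<gamma> t) = Q p p"
    unfolding Q_def L2inner_def
  proof (rule integral_cong_AE)
    show "(\<lambda>w. V (\<gamma> t) w * mult_op f (V (\<gamma> t)) w) \<in> borel_measurable M"
      unfolding mult_op_def using L2_meas[OF VL2[of "\<gamma> t"]] f_meas by measurable
    show "(\<lambda>w. V p w * mult_op f (V p) w) \<in> borel_measurable M"
      unfolding mult_op_def using L2_meas[OF VL2[of p]] f_meas by measurable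
    show "AE w in M. V (\<gamma> t) w * mult_op f (V (\<gamma> t)) w = V p w * mult_op f (V p) w"
      using Vm by eventually_elim (simp add: gt V_add mult_op_def)
  qed
  have Qp: "Q p p = (1 - t) * Q (\<gamma> 0) (\<gamma> 0) + t * Q (\<gamma> 1) (\<gamma> 1) - t * (1 - t) * Q (\<gamma> 0 - \<gamma> 1) (\<gamma> 0 - \<gamma> 1)"
    unfolding p_def by (rule quad_expand[OF Q_bilinear Q_commute])
  have dd: "(Kdist (\<lambda>\<xi>. Vinv (W \<xi>)) (\<gamma> 0) (\<gamma> 1))^2 = B (\<gamma> 0 - \<gamma> 1) (\<gamma> 0 - \<gamma> 1)"
    unfolding Kdist_eq using B_nonneg B_minus by simp
  define h where "h = \<gamma> 0 - \<gamma> 1"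
  have tt: "t * (1 - t) \<ge> 0" using t by simp
  have X: "t * (1 - t) * (Q h h + lam * B h h) \<le> 0"
    using key[of h] tt by (simp add: mult_nonneg_nonpos)
  have "- (1/2) * Q p p - ((1 - t) * (- (1/2) * Q (\<gamma> 0) (\<gamma> 0)) + t * (- (1/2) * Q (\<gamma> 1) (\<gamma> 1))
          - lam * (t * (1 - t) / 2) * B h h) = (t * (1 - t) * (Q h h + lam * B h h)) / 2"
    unfolding Qp h_def by (simp add: field_simps)
  with X have "- (1/2) * Q p p \<le> (1 - t) * (- (1/2) * Q (\<gamma> 0) (\<gamma> 0)) + t * (- (1/2) * Q (\<gamma> 1) (\<gamma> 1))
          - lam * (t * (1 - t) / 2) * B h h" by linarith
  then show "- (1/2) * Q (\<gamma> t) (\<gamma> t) \<le> (1 - t) * (- (1/2) * Q (\<gamma> 0) (\<gamma> 0)) + t * (- (1/2) * Q (\<gamma> 1) (\<gamma> 1))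
          - lam * (t * (1 - t) / 2) * (Kdist (\<lambda>\<xi>. Vinv (W \<xi>)) (\<gamma> 0) (\<gamma> 1))^2"
    unfolding Qeq dd h_def .
qed


lemma ereal_le_real_of: "E \<noteq> \<infinity> \<Longrightarrow> E \<le> ereal (real_of_ereal E)"
  by (cases E) auto

lemma esssup_fin: "esssup M (\<lambda>w. ereal (f w)) \<noteq> \<infinity>"
proof -
  have "esssup M (\<lambda>w. ereal (f w)) \<le> ereal C0"
    by (rule esssup_I) (use f_meas f_bdd in \<open>auto elim!: eventually_mono\<close>)
  then show ?thesis by auto
qed

lemma f_le_ess: "AE w in M. f w \<le> ess_sup M f"
proof -
  have "AE w in M. ereal (f w) \<le> esssup M (\<lambda>w. ereal (f w))" by (rule esssup_AE)
  then show ?thesis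
  proof eventually_elim
    case (elim w)
    then have "ereal (f w) \<le> ereal (ess_sup M f)"
      unfolding ess_sup_def using ereal_le_real_of[OF esssup_fin] order_trans by blast
    then show ?case by simp
  qed
qed

lemma Q_le_ess: "Q h h \<le> ess_sup M f * B h h"
proof -
  have "Q h h = (LINT w|M. V h w * mult_op f (V h) w)" unfolding Q_def L2inner_def ..
  also have "\<dots> \<le> (LINT w|M. ess_sup M f * (V h w * V h w))"
  proof (rule integral_mono_AE)
    show "integrable M (\<lambda>w. V h w * mult_op f (V h) w)" by (rule Q_int)
    show "integrable M (\<lambda>w. ess_sup M f * (V h w * V h w))" using L2_sq_int[OF VL2] by simp
    show "AE w in M. V h w * mult_op f (V h) w \<le> ess_sup M f * (V h w * V h w)"
      using f_le_ess
    proof eventually_elim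
      case (elim w)
      have "V h w * mult_op f (V h) w = f w * (V h w * V h w)" by (simp add: mult_op_def)
      also have "\<dots> \<le> ess_sup M f * (V h w * V h w)" using elim by (intro mult_right_mono) auto
      finally show ?case .
    qed
  qed
  also have "\<dots> = ess_sup M f * B h h" unfolding B_def L2inner_def by simp
  finally show ?thesis .
qed

lemma V_zero: "V 0 = (\<lambda>w. 0)"
  using V_scale[of 0 0] by simp

lemma opnorm_prod:
  assumes "B h h > 0"
  shows "opnorm_Vinv M Vinv * opnorm_V M V \<ge> 1"
proof -
  obtain CV where CV: "CV \<ge> 0" "\<And>x. L2norm M (V x) \<le> CV * norm x" using V_bound by blast
  obtain CI where CI: "CI \<ge> 0" "\<And>g. g \<in> L2 M \<Longrightarrow> norm (Vinv g) \<le> CI * L2norm M g" using Vinv_bound by blast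
  have L2n0: "L2norm M g \<ge> 0" for g unfolding L2norm_def using L2inner_nonneg by simp
  define n where "n = L2norm M (V h)"
  have n: "n > 0" unfolding n_def L2norm_def using assms unfolding B_def by simp
  have h0: "h \<noteq> 0" using assms V_zero unfolding B_def L2inner_def by auto
  hence hn: "norm h > 0" by simp
  have b: "opnorm_V M V \<ge> n / norm h"
    unfolding opnorm_V_def n_def
  proof (rule cSUP_upper)
    show "h \<in> UNIV" by simp
    show "bdd_above (range (\<lambda>x. L2norm M (V x) / norm x))"
    proof (rule bdd_aboveI2)
      fix x :: 'h
      show "L2norm M (V x) / norm x \<le> CV"
      proof (cases "x = 0")
        case True then show ?thesis using CV by simp
      next
        case False then show ?thesis using CV(2)[of x] by (simp add: divide_le_eq)
      qed
    qed
  qed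
  have a: "opnorm_Vinv M Vinv \<ge> norm h / n"
  proof -
    have "norm (Vinv (V h)) / L2norm M (V h) \<le> opnorm_Vinv M Vinv"
      unfolding opnorm_Vinv_def
    proof (rule cSUP_upper)
      show "V h \<in> L2 M" by (rule VL2)
      show "bdd_above ((\<lambda>g. norm (Vinv g) / L2norm M g) ` L2 M)"
      proof (rule bdd_aboveI2)
        fix g assume g: "g \<in> L2 M"
        show "norm (Vinv g) / L2norm M g \<le> CI"
        proof (cases "L2norm M g = 0")
          case True then show ?thesis using CI by simp
        next
          case False then have "L2norm M g > 0" using L2n0[of g] by simp
          then show ?thesis using CI(2)[OF g] by (simp add: divide_le_eq)
        qed
      qed
    qed
    then show ?thesis using Vinv_V n_def by simp
  qed
  have "1 = (norm h / n) * (n / norm h)" using n hn by simp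
  also have "\<dots> \<le> opnorm_Vinv M Vinv * opnorm_V M V"
  proof (rule mult_mono[OF a b])
    have "0 \<le> norm h / n" using n by simp
    then show "0 \<le> opnorm_Vinv M Vinv" using a by linarith
    show "0 \<le> n / norm h" using n hn by simp
  qed
  finally show ?thesis .
qed

lemma key_ineq:
  defines "cV \<equiv> (if ess_sup M f \<ge> 0 then (opnorm_Vinv M Vinv)^2 * (opnorm_V M V)^2
                   else 1 / ((opnorm_Vinv M Vinv)^2 * (opnorm_V M V)^2))"
  shows "Q h h + (- ess_sup M f * cV) * B h h \<le> 0"
proof -
  define e where "e = ess_sup M f"
  have "e * B h h \<le> e * cV * B h h"
  proof (cases "B h h = 0")
    case True then show ?thesis by simp
  next
    case False
    then have Bp: "B h h > 0" using B_nonneg[of h] by simp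
    define P where "P = opnorm_Vinv M Vinv * opnorm_V M V"
    have P1: "P \<ge> 1" unfolding P_def by (rule opnorm_prod[OF Bp])
    have P2: "P^2 \<ge> 1" using P1 by (simp add: one_le_power)
    have cVP: "cV = (if e \<ge> 0 then P^2 else 1 / P^2)"
      unfolding cV_def P_def e_def by (simp add: power_mult_distrib)
    show ?thesis
    proof (cases "e \<ge> 0")
      case True
      then have "e * B h h * 1 \<le> e * B h h * P^2" using Bp P2 by (intro mult_left_mono) auto
      then show ?thesis using True cVP by (simp add: mult_ac)
    next
      case False
      have "1 / P^2 \<le> 1 / 1" by (rule divide_left_mono) (use P2 in auto)
      then have c: "cV = 1 / P^2" "0 < 1 / P^2" "1 / P^2 \<le> 1" using cVP P2 False by auto
      have "e * B h h \<le> 0" using False Bp by (simp add: mult_nonpos_nonneg)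
      then have "e * B h h * 1 \<le> e * B h h * (1 / P^2)" using c by (intro mult_left_mono_neg) auto
      then show ?thesis using c by (simp add: mult_ac)
    qed
  qed
  then show ?thesis using Q_le_ess[of h] unfolding e_def by simp
qed

end


lemma sq_sum_le: "(a + b)^2 \<le> 2 * a^2 + 2 * (b::real)^2"
proof -
  have "0 \<le> (a - b)^2" by simp
  then show ?thesis by (simp add: power2_sum power2_diff)
qed

context hsetup begin

lemma f_bdd': "AE w in M. (f w)^2 \<le> C0^2"
  using f_bdd
proof eventually_elim
  case (elim w)
  have "C0 \<le> \<bar>C0\<bar>" by simp
  with elim have "\<bar>f w\<bar> \<le> \<bar>C0\<bar>" by linarith
  then show ?case using abs_le_square_iff by blast
qed

lemma mult_L2: assumes g: "g \<in> L2 M" shows "(\<lambda>w. f w * g w) \<in> L2 M"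
proof -
  have gm: "g \<in> borel_measurable M" using g by (simp add: L2_def)
  have "integrable M (\<lambda>w. ((f w * g w))^2)"
  proof (rule Bochner_Integration.integrable_bound)
    show "integrable M (\<lambda>w. C0^2 * (g w)^2)" using g by (simp add: L2_def)
    show "(\<lambda>w. (f w * g w)^2) \<in> borel_measurable M" using gm f_meas by measurable
    show "AE w in M. norm ((f w * g w)^2) \<le> norm (C0^2 * (g w)^2)"
      using f_bdd'
    proof eventually_elim
      case (elim w)
      have "(f w * g w)^2 = (f w)^2 * (g w)^2" by (simp add: power_mult_distrib)
      also have "\<dots> \<le> C0^2 * (g w)^2" using elim by (intro mult_right_mono) auto
      finally show ?case by simp
    qed
  qed
  then show ?thesis using gm f_meas unfolding L2_def by auto
qed

lemma spec_part:
  assumes fin: "finite_measure M"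
    and A_diag: "\<forall>x. A x = Vinv (mult_op f (V x))"
    and spec: "op_spectrum A \<subseteq> {..0}"
  shows "AE w in M. f w \<le> 0"
proof (rule ccontr)
  assume nAE: "\<not> (AE w in M. f w \<le> 0)"
  define E where "E = esssup M (\<lambda>w. ereal (f w))"
  have fm: "(\<lambda>w. ereal (f w)) \<in> borel_measurable M" using f_meas by measurable
  have E0: "E > 0"
  proof (rule ccontr)
    assume "\<not> E > 0"
    hence "E \<le> 0" by simp
    moreover have "AE w in M. ereal (f w) \<le> E" unfolding E_def by (rule esssup_AE)
    moreover note \<open>AE w in M. ereal (f w) \<le> E\<close>
    then have "AE w in M. f w \<le> 0"
    proof eventually_elim
      case (elim w)
      have "ereal (f w) \<le> 0" using elim \<open>E \<le> 0\<close> by (rule order_trans)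
      then show ?case by simp
    qed
    with nAE show False by simp
  qed
  define s where "s = real_of_ereal E"
  have Efin: "E \<noteq> \<infinity>" unfolding E_def by (rule esssup_fin)
  have Es: "E = ereal s" unfolding s_def using E0 Efin by (cases E) auto
  have s0: "s > 0" using E0 Es by simp
  have fs: "AE w in M. f w \<le> s" using f_le_ess unfolding ess_sup_def E_def[symmetric] s_def .
  have "s \<notin> op_spectrum A" using spec s0 by auto
  then obtain Bi where Bi: "bounded_linear Bi" "\<And>x. Bi (A x - s *\<^sub>R x) = x"
    unfolding op_spectrum_def by blast
  obtain K where K: "K > 0" "\<And>y. norm (Bi y) \<le> norm y * K"
    using bounded_linear.pos_bounded[OF Bi(1)] by blast
  obtain CV where CV: "CV \<ge> 0" "\<And>x. L2norm M (V x) \<le> CV * norm x" using V_bound by blast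
  obtain CI where CI: "CI \<ge> 0" "\<And>g. g \<in> L2 M \<Longrightarrow> norm (Vinv g) \<le> CI * L2norm M g" using Vinv_bound by blast
  define \<epsilon> where "\<epsilon> = 1 / (CV * K * CI + 1)"
  have CKC: "CV * K * CI \<ge> 0" using CV K CI by simp
  have eps: "\<epsilon> > 0" unfolding \<epsilon>_def using CKC by simp
  have eps1: "CV * K * CI * \<epsilon> < 1" unfolding \<epsilon>_def using CKC by (simp add: divide_less_eq)
  define S where "S = {w \<in> space M. \<bar>f w - s\<bar> < \<epsilon>}"
  have Ssets: "S \<in> sets M" unfolding S_def using f_meas by measurable
  have Spos: "emeasure M S > 0"
  proof -
    have "ereal (s - \<epsilon>) < E" using Es eps by simp
    hence "emeasure M {w \<in> space M. ereal (f w) > ereal (s - \<epsilon>)} > 0"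
      unfolding E_def by (rule esssup_pos_measure[OF fm])
    also have "emeasure M {w \<in> space M. ereal (f w) > ereal (s - \<epsilon>)} \<le> emeasure M S"
    proof (rule emeasure_mono_AE)
      show "S \<in> sets M" by (rule Ssets)
      show "AE x in M. x \<in> {w \<in> space M. ereal (s - \<epsilon>) < ereal (f w)} \<longrightarrow> x \<in> S"
        using fs by eventually_elim (auto simp: S_def)
    qed
    finally show ?thesis .
  qed
  interpret fm: finite_measure M by (rule fin)
  define \<mu> where "\<mu> = measure M S"
  have mu: "\<mu> > 0" unfolding \<mu>_def using Spos fm.emeasure_eq_measure by simp
  define g where "g = (\<lambda>w. indicator S w :: real)"
  have gint: "integrable M g" unfolding g_def
    by (rule integrable_real_indicator) (use Ssets in \<open>auto simp: fm.emeasure_eq_measure\<close>)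
  have gsq: "(g w)^2 = g w" for w unfolding g_def by (simp add: indicator_def)
  have gL2: "g \<in> L2 M" unfolding L2_def using gint gsq Ssets unfolding g_def by simp
  have gi: "(LINT w|M. g w) = \<mu>" unfolding g_def \<mu>_def using Ssets by (simp add: fm.emeasure_eq_measure)
  have "(\<lambda>w. g w * g w) = g" using gsq by (simp add: power2_eq_square[symmetric])
  hence gg: "L2inner M g g = \<mu>" unfolding L2inner_def using gi by simp
  define x where "x = Vinv g"
  have Vx: "AE w in M. V x w = g w" unfolding x_def by (rule V_Vinv[OF gL2])
  have "L2inner M (V x) (V x) = L2inner M g g"
    unfolding L2inner_def
    by (rule integral_cong_AE) (use Vx L2_meas[OF VL2[of x]] L2_meas[OF gL2] in \<open>auto elim!: eventually_mono\<close>)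
  hence nVx: "L2norm M (V x) = sqrt \<mu>" unfolding L2norm_def gg by simp
  define r where "r = (\<lambda>w. (f w - s) * g w)"
  have fgL2: "(\<lambda>w. f w * g w) \<in> L2 M" by (rule mult_L2[OF gL2])
  have sgL2: "(\<lambda>w. (-s) * g w) \<in> L2 M" using gL2 unfolding L2_def by (auto simp: power_mult_distrib)
  have rL2: "r \<in> L2 M"
  proof -
    have "(\<lambda>w. f w * g w) \<in> L2 M" by (rule mult_L2[OF gL2])
    moreover have "(\<lambda>w. (-s) * g w) \<in> L2 M" using gL2 unfolding L2_def by (auto simp: power_mult_distrib)
    ultimately have "(\<lambda>w. f w * g w + (-s) * g w) \<in> L2 M"
      unfolding L2_def
    proof (intro CollectI conjI)
      assume a: "(\<lambda>w. f w * g w) \<in> {g. g \<in> borel_measurable M \<and> integrable M (\<lambda>w. (g w)\<^sup>2)}"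
        and b: "(\<lambda>w. - s * g w) \<in> {g. g \<in> borel_measurable M \<and> integrable M (\<lambda>w. (g w)\<^sup>2)}"
      show "(\<lambda>w. f w * g w + - s * g w) \<in> borel_measurable M" using a b by auto
      show "integrable M (\<lambda>w. (f w * g w + - s * g w)\<^sup>2)"
      proof (rule Bochner_Integration.integrable_bound)
        show "integrable M (\<lambda>w. 2 * (f w * g w)^2 + 2 * (- s * g w)^2)" using a b by auto
        show "(\<lambda>w. (f w * g w + - s * g w)\<^sup>2) \<in> borel_measurable M" using a b by auto
        show "AE w in M. norm ((f w * g w + - s * g w)\<^sup>2) \<le> norm (2 * (f w * g w)^2 + 2 * (- s * g w)^2)"
        proof (rule AE_I2)
          fix w
          have "(f w * g w + - s * g w)\<^sup>2 \<le> 2 * (f w * g w)^2 + 2 * (- s * g w)^2"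
            by (rule sq_sum_le)
          then show "norm ((f w * g w + - s * g w)\<^sup>2) \<le> norm (2 * (f w * g w)^2 + 2 * (- s * g w)^2)" by simp
        qed
      qed
    qed
    moreover have "(\<lambda>w. f w * g w + (-s) * g w) = r" unfolding r_def by (auto simp: algebra_simps)
    ultimately show ?thesis by simp
  qed
  have Ax: "A x - s *\<^sub>R x = Vinv r"
  proof -
    have "mult_op f (V x) \<in> L2 M" unfolding mult_op_def by (rule mult_L2[OF VL2])
    have "A x = Vinv (mult_op f (V x))" using A_diag by simp
    also have "\<dots> = Vinv (\<lambda>w. f w * g w)"
    proof (rule Vinv_cong)
      show "mult_op f (V x) \<in> L2 M" unfolding mult_op_def by (rule mult_L2[OF VL2])
      show "(\<lambda>w. f w * g w) \<in> L2 M" by (rule mult_L2[OF gL2])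
      show "AE w in M. mult_op f (V x) w = f w * g w" using Vx by eventually_elim (simp add: mult_op_def)
    qed
    finally have ax: "A x = Vinv (\<lambda>w. f w * g w)" .
    have sx: "- (s *\<^sub>R x) = Vinv (\<lambda>w. (-s) * g w)" unfolding x_def using Vinv_scale[OF gL2, of "-s"] by simp
    have "A x - s *\<^sub>R x = Vinv (\<lambda>w. f w * g w) + Vinv (\<lambda>w. (-s) * g w)" using ax sx by simp
    also have "\<dots> = Vinv (\<lambda>w. f w * g w + (-s) * g w)"
      by (rule Vinv_add[OF fgL2 sgL2, symmetric])
    also have "(\<lambda>w. f w * g w + (-s) * g w) = r" unfolding r_def by (auto simp: algebra_simps)
    finally show ?thesis .
  qed
  have rr: "L2inner M r r \<le> \<epsilon>^2 * \<mu>"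
  proof -
    have "L2inner M r r = (LINT w|M. r w * r w)" unfolding L2inner_def ..
    also have "\<dots> \<le> (LINT w|M. \<epsilon>^2 * g w)"
    proof (rule integral_mono)
      show "integrable M (\<lambda>w. r w * r w)" by (rule L2_sq_int[OF rL2])
      show "integrable M (\<lambda>w. \<epsilon>^2 * g w)" using gint by simp
      fix w assume "w \<in> space M"
      show "r w * r w \<le> \<epsilon>^2 * g w"
      proof (cases "w \<in> S")
        case True
        then have "\<bar>f w - s\<bar> < \<epsilon>" unfolding S_def by simp
        then have "(f w - s)^2 \<le> \<epsilon>^2" using eps abs_le_square_iff[of "f w - s" \<epsilon>] by simp
        then show ?thesis using True unfolding r_def g_def by (simp add: power2_eq_square)
      next
        case False then show ?thesis unfolding r_def g_def by simp
      qed
    qed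
    also have "\<dots> = \<epsilon>^2 * \<mu>" using gi by simp
    finally show ?thesis .
  qed
  have nr: "L2norm M r \<le> \<epsilon> * sqrt \<mu>"
  proof -
    have "L2norm M r \<le> sqrt (\<epsilon>^2 * \<mu>)" unfolding L2norm_def using rr by simp
    also have "\<dots> = \<epsilon> * sqrt \<mu>" using eps by (simp add: real_sqrt_mult)
    finally show ?thesis .
  qed
  have "sqrt \<mu> \<le> CV * norm x" using CV(2)[of x] nVx by simp
  also have "norm x \<le> norm (A x - s *\<^sub>R x) * K" using K(2)[of "A x - s *\<^sub>R x"] Bi(2)[of x] by simp
  hence "CV * norm x \<le> CV * (norm (Vinv r) * K)" using CV Ax by (simp add: mult_left_mono)
  also have "norm (Vinv r) \<le> CI * L2norm M r" by (rule CI(2)[OF rL2])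
  hence "norm (Vinv r) \<le> CI * (\<epsilon> * sqrt \<mu>)"
    using mult_left_mono[OF nr CI(1)] by linarith
  hence "CV * (norm (Vinv r) * K) \<le> CV * ((CI * (\<epsilon> * sqrt \<mu>)) * K)"
    using CV K by (intro mult_left_mono mult_right_mono) auto
  also have "\<dots> = (CV * K * CI * \<epsilon>) * sqrt \<mu>" by (simp add: mult_ac)
  finally have "1 * sqrt \<mu> \<le> (CV * K * CI * \<epsilon>) * sqrt \<mu>" by simp
  moreover have "sqrt \<mu> > 0" using mu by simp
  ultimately have "1 \<le> CV * K * CI * \<epsilon>" by (simp add: mult_le_cancel_right)
  with eps1 show False by simp
qed

end


theorem theorem2:
  fixes M :: "'w measure"
    and f :: "'w \<Rightarrow> real"
    and V :: "'h::{real_inner, complete_space} \<Rightarrow> 'w \<Rightarrow> real"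
    and Vinv :: "('w \<Rightarrow> real) \<Rightarrow> 'h"
    and W :: "'h \<Rightarrow> 'w \<Rightarrow> real"
    and A :: "'h \<Rightarrow> 'h"
  assumes sep: "separable_space (euclidean :: 'h topology)"
    and f_meas: "f \<in> borel_measurable M"
    and f_bdd: "\<exists>C. AE w in M. \<bar>f w\<bar> \<le> C"
    and V: "bounded_linear_to_L2 M V"
    and Vinv: "is_bounded_inverse M V Vinv"
    and W: "is_adjoint_of_inv M Vinv W"
    and A_bl: "bounded_linear A"
    and A_surj: "surj A"
    and A_diag: "\<forall>x. A x = Vinv (mult_op f (V x))"
  shows "let F = (\<lambda>x. - (1/2) * L2inner M (V x) (mult_op f (V x)));
             K = (\<lambda>\<xi>. Vinv (W \<xi>));
             d = Kdist K;
             cV = (if ess_sup M f \<ge> 0 then (opnorm_Vinv M Vinv)^2 * (opnorm_V M V)^2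
                   else 1 / ((opnorm_Vinv M Vinv)^2 * (opnorm_V M V)^2));
             lam = - ess_sup M f * cV
         in geodesically_convex d F lam \<and>
            ((finite_measure M \<and> op_spectrum A \<subseteq> {..0}) \<longrightarrow>
               (AE w in M. f w \<le> 0) \<and> lam \<ge> 0)"
proof -
  obtain C0 where C0: "AE w in M. \<bar>f w\<bar> \<le> C0" using f_bdd by blast
  interpret hs: hsetup M f V Vinv W C0
    by (rule hsetup.intro) (use f_meas C0 V Vinv W in auto)
  define cV where "cV = (if ess_sup M f \<ge> 0 then (opnorm_Vinv M Vinv)^2 * (opnorm_V M V)^2
                   else 1 / ((opnorm_Vinv M Vinv)^2 * (opnorm_V M V)^2))"
  have geo: "geodesically_convex (Kdist (\<lambda>\<xi>. Vinv (W \<xi>)))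
      (\<lambda>x. - (1/2) * L2inner M (V x) (mult_op f (V x))) (- ess_sup M f * cV)"
    using hs.geo_convex[of "- ess_sup M f * cV"] hs.key_ineq unfolding hs.Q_def cV_def by blast
  have part2: "(AE w in M. f w \<le> 0) \<and> - ess_sup M f * cV \<ge> 0"
    if fin: "finite_measure M" and sp: "op_spectrum A \<subseteq> {..0}"
  proof
    show ae: "AE w in M. f w \<le> 0" by (rule hs.spec_part[OF fin A_diag sp])
    have "esssup M (\<lambda>w. ereal (f w)) \<le> 0"
      by (rule esssup_I) (use f_meas ae in \<open>auto elim!: eventually_mono\<close>)
    hence e0: "ess_sup M f \<le> 0" unfolding ess_sup_def
      by (cases "esssup M (\<lambda>w. ereal (f w))") auto
    show "- ess_sup M f * cV \<ge> 0"
    proof (cases "ess_sup M f \<ge> 0")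
      case True
      then have "ess_sup M f = 0" using e0 by simp
      then show ?thesis by simp
    next
      case False
      then have "cV \<ge> 0" unfolding cV_def by simp
      then show ?thesis using e0 by (simp add: mult_nonpos_nonneg)
    qed
  qed
  show ?thesis unfolding Let_def cV_def[symmetric] using geo part2 by blast
qed


end
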